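(* With probability $1-o(1)$ (as $n\to\infty$), $r=O\big((\log n)^\alpha\big)$.
   Context: All logarithms are base 2. Let $n$ be a large even integer and $V$ a set of $n$ vertices; $G$ is the random 10-regular multigraph on $V$ whose edges are the union of 10 independent uniformly random perfect matchings on $V$; $\mathrm{dist}_G$ is hop distance. Fix a small constant $\varepsilon>0$ and $\alpha=\frac{\log 5}{\log 5+1-\varepsilon}$. Let $T\subseteq V$ be an arbitrary set of $k=\lfloor n/2^{(\log n)^\alpha}\rfloor$ vertices (terminals). For $i\ge0$ let $B_i=\{u\in V:\min_{t\in T}\mathrm{dist}_G(u,t)\le i\}$. Let $m=\lfloor 10n/(\log n)^\alpha\rfloor$ and $r=\min\{i: |B_i|\ge 2m\}-1$. *)

theory Defs
  imports "HOL-Probability.Probability"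
begin

text \<open>Vertex set V = {0..<n}. A perfect matching on V is a fixed-point-free
involution of V; outside V it is the identity (to make the set finite).\<close>
definition perfect_matchings :: "nat \<Rightarrow> (nat \<Rightarrow> nat) set" where
  "perfect_matchings n = {f. (\<forall>x<n. f x < n \<and> f x \<noteq> x \<and> f (f x) = x) \<and> (\<forall>x\<ge>n. f x = x)}"

text \<open>The random 10-regular multigraph: 10 independent uniform perfect matchings,
i.e. the uniform distribution on 10-tuples of perfect matchings.\<close>
definition matching_tuples :: "nat \<Rightarrow> (nat \<Rightarrow> nat \<Rightarrow> nat) set" where
  "matching_tuples n = PiE {..<10} (\<lambda>_. perfect_matchings n)"

definition random_graph :: "nat \<Rightarrow> (nat \<Rightarrow> nat \<Rightarrow> nat) pmf" where
  "random_graph n = pmf_of_set (matching_tuples n)"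

definition edges :: "nat \<Rightarrow> (nat \<Rightarrow> nat \<Rightarrow> nat) \<Rightarrow> (nat \<times> nat) set" where
  "edges n M = {(u, v). u < n \<and> v < n \<and> (\<exists>i<10. M i u = v)}"

definition ball :: "nat \<Rightarrow> (nat \<Rightarrow> nat \<Rightarrow> nat) \<Rightarrow> nat set \<Rightarrow> nat \<Rightarrow> nat set" where
  "ball n M T i = {u. u < n \<and> (\<exists>t\<in>T. (t, u) \<in> (Id_on {..<n} \<union> edges n M) ^^ i)}"

definition alpha :: "real \<Rightarrow> real" where
  "alpha \<epsilon> = log 2 5 / (log 2 5 + 1 - \<epsilon>)"

definition num_terminals :: "real \<Rightarrow> nat \<Rightarrow> nat" where
  "num_terminals \<epsilon> n = nat \<lfloor>real n / 2 powr ((log 2 (real n)) powr alpha \<epsilon>)\<rfloor>"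

definition m_param :: "real \<Rightarrow> nat \<Rightarrow> nat" where
  "m_param \<epsilon> n = nat \<lfloor>10 * real n / (log 2 (real n)) powr alpha \<epsilon>\<rfloor>"

text \<open>r = min{i : |B_i| \<ge> 2m} - 1 (as an integer; only meaningful when some such i exists).\<close>
definition r_param :: "real \<Rightarrow> nat \<Rightarrow> (nat \<Rightarrow> nat \<Rightarrow> nat) \<Rightarrow> nat set \<Rightarrow> int" where
  "r_param \<epsilon> n M T = int (LEAST i. card (ball n M T i) \<ge> 2 * m_param \<epsilon> n) - 1"

end

theory Submission
  imports Defs "HOL-Probability.Probability"
begin


definition pm :: "nat set \<Rightarrow> (nat \<Rightarrow> nat) set" where
  "pm V = {f. (\<forall>x\<in>V. f x \<in> V \<and> f x \<noteq> x \<and> f (f x) = x) \<and> (\<forall>x. x \<notin> V \<longrightarrow> f x = x)}"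

lemma pm_pm: "perfect_matchings n = pm {..<n}"
  unfolding perfect_matchings_def pm_def by auto

lemma finite_pm: assumes "finite V" shows "finite (pm V)"
proof -
  have "pm V \<subseteq> (\<lambda>g x. if x \<in> V then g x else x) ` (PiE V (\<lambda>_. V))"
  proof
    fix f assume f: "f \<in> pm V"
    have "f = (\<lambda>x. if x \<in> V then restrict f V x else x)"
      using f by (auto simp: pm_def)
    moreover have "restrict f V \<in> PiE V (\<lambda>_. V)" using f by (auto simp: pm_def)
    ultimately show "f \<in> (\<lambda>g x. if x \<in> V then g x else x) ` (PiE V (\<lambda>_. V))" by blast
  qed
  moreover have "finite (PiE V (\<lambda>_. V))" using assms by (simp add: finite_PiE)
  ultimately show ?thesis using finite_subset by blast
qed

lemma pm_split_bij:
  assumes x: "x \<in> V" and y: "y \<in> V" "y \<noteq> x"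
  shows "bij_betw (\<lambda>f. f(x := x, y := y)) {f \<in> pm V. f x = y} (pm (V - {x, y}))"
proof (rule bij_betwI[where g = "\<lambda>g. g(x := y, y := x)"])
  show "(\<lambda>f. f(x := x, y := y)) \<in> {f \<in> pm V. f x = y} \<rightarrow> pm (V - {x, y})"
  proof
    fix f assume f: "f \<in> {f \<in> pm V. f x = y}"
    hence fx: "f x = y" and fy: "f y = x" and fp: "f \<in> pm V" using x by (auto simp: pm_def)
    have "f z \<noteq> x \<and> f z \<noteq> y" if z: "z \<in> V - {x,y}" for z
    proof -
      have ffz: "f (f z) = z" using fp z by (auto simp: pm_def)
      have ffx: "f (f x) = x" using fp x by (auto simp: pm_def)
      show ?thesis using ffz ffx fx z by auto
    qed
    then show "f(x := x, y := y) \<in> pm (V - {x, y})" using fp unfolding pm_def by auto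
  qed
  show "(\<lambda>g. g(x := y, y := x)) \<in> pm (V - {x, y}) \<rightarrow> {f \<in> pm V. f x = y}"
  proof
    fix g assume g: "g \<in> pm (V - {x,y})"
    have gx: "g x = x" "g y = y" using g by (auto simp: pm_def)
    have "\<And>z. z \<in> V - {x,y} \<Longrightarrow> g z \<in> V - {x,y} \<and> g z \<noteq> z \<and> g (g z) = z" using g by (auto simp: pm_def)
    then show "g(x := y, y := x) \<in> {f \<in> pm V. f x = y}" using g x y unfolding pm_def by auto
  qed
  show "f(x := x, y := y, x := y, y := x) = f" if f: "f \<in> {f \<in> pm V. f x = y}" for f
  proof -
    have "f x = y" using f by auto
    moreover have "f y = x" using f x unfolding pm_def by force
    ultimately show ?thesis by (intro ext) simp
  qed
  show "g(x := y, y := x, x := x, y := y) = g" if g: "g \<in> pm (V - {x,y})" for g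
  proof -
    have "g x = x" "g y = y" using g unfolding pm_def by auto
    then show ?thesis by (intro ext) simp
  qed
qed

lemma pm_other:
  assumes f: "f \<in> pm V" and x: "x \<in> V" and fx: "f x = y" and z: "z \<in> V" "z \<noteq> x" "z \<noteq> y"
  shows "f z \<noteq> x \<and> f z \<noteq> y"
proof -
  have ffz: "f (f z) = z" using f z by (auto simp: pm_def)
  have ffx: "f (f x) = x" using f x by (auto simp: pm_def)
  show ?thesis using ffz ffx fx z by auto
qed

fun pmc :: "nat \<Rightarrow> nat" where
  "pmc 0 = 1"
| "pmc (Suc 0) = 0"
| "pmc (Suc (Suc n)) = Suc n * pmc n"

lemma pm_decomp:
  assumes "x \<in> V"
  shows "{f \<in> pm V. P f} = (\<Union>y\<in>V - {x}. {f \<in> pm V. f x = y \<and> P f})"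
  using assms by (auto simp: pm_def)

lemma card_pm_split:
  assumes V: "finite V" and x: "x \<in> V" and y: "y \<in> V" "y \<noteq> x"
  shows "card {f \<in> pm V. f x = y} = card (pm (V - {x, y}))"
  using bij_betw_same_card[OF pm_split_bij[OF x y]] .

lemma card_pm: "finite V \<Longrightarrow> card (pm V) = pmc (card V)"
proof (induction "card V" arbitrary: V rule: less_induct)
  case less
  show ?case
  proof (cases "V = {}")
    case True
    have "pm V = {id}" using True by (auto simp: pm_def)
    then show ?thesis using True by simp
  next
    case False
    then obtain x where x: "x \<in> V" by blast
    have fin: "finite (pm W)" if "W \<subseteq> V" for W
      using finite_pm finite_subset less.prems that by blast
    have "card (pm V) = card (\<Union>y\<in>V - {x}. {f \<in> pm V. f x = y})"
      using pm_decomp[OF x, of "\<lambda>_. True"] by simp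
    also have "\<dots> = (\<Sum>y\<in>V - {x}. card {f \<in> pm V. f x = y})"
      by (rule card_UN_disjoint) (auto intro: finite_subset[OF _ fin[of V]] less.prems)
    also have "\<dots> = (\<Sum>y\<in>V - {x}. pmc (card V - 2))"
    proof (rule sum.cong)
      fix y assume y: "y \<in> V - {x}"
      have c: "card (V - {x, y}) = card V - 2" using x y less.prems by (simp add: card_Diff_subset)
      have "card {f \<in> pm V. f x = y} = card (pm (V - {x, y}))"
        using card_pm_split[OF less.prems x] y by auto
      also have "\<dots> = pmc (card (V - {x,y}))"
        using less.hyps[of "V - {x,y}"] less.prems x y c
        by (metis card_gt_0_iff diff_less empty_iff finite_Diff zero_less_numeral)
      finally show "card {f \<in> pm V. f x = y} = pmc (card V - 2)" using c by simp
    qed auto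
    also have "\<dots> = (card V - 1) * pmc (card V - 2)" using x less.prems by simp
    also have "\<dots> = pmc (card V)"
    proof (cases "card V")
      case 0 then show ?thesis using x less.prems by auto
    next
      case (Suc k) then show ?thesis by (cases k) auto
    qed
    finally show ?thesis .
  qed
qed

lemma card_pm_rec:
  assumes "finite V" "x \<in> V" "y \<in> V" "y \<noteq> x"
  shows "card (pm V) = (card V - 1) * card (pm (V - {x, y}))"
proof -
  have c: "card (V - {x, y}) = card V - 2" using assms by (simp add: card_Diff_subset)
  obtain k where k: "card V = Suc (Suc k)"
  proof -
    have "card {x, y} \<le> card V" using assms by (intro card_mono) auto
    then have "2 \<le> card V" using assms by simp
    then show ?thesis using that by (metis add_2_eq_Suc le_Suc_ex)
  qed
  show ?thesis using card_pm[of V] card_pm[of "V - {x,y}"] assms c k by simp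
qed



lemma ratio_step:
  fixes a b :: real and h h' :: nat
  assumes "0 \<le> a" "a \<le> b" "h - 1 \<le> h'"
  shows "(a / b) ^ h' \<le> ((a + 2) / (b + 2)) ^ (h - 1)"
proof -
  have r0: "0 \<le> a / b" using assms by simp
  have r1: "a / b \<le> 1" using assms by (cases "b = 0") auto
  have "(a / b) ^ h' \<le> (a / b) ^ (h - 1)" by (rule power_decreasing) (use assms r0 r1 in auto)
  also have "\<dots> \<le> ((a + 2) / (b + 2)) ^ (h - 1)"
  proof (rule power_mono)
    show "a / b \<le> (a + 2) / (b + 2)"
    proof (cases "b = 0")
      case True then show ?thesis using assms by simp
    next
      case False
      then have "b > 0" using assms by simp
      then show ?thesis using assms by (simp add: divide_simps) (simp add: algebra_simps)
    qed
  qed (use r0 in auto)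
  finally show ?thesis .
qed

lemma pmc_rec: "1 \<le> k \<Longrightarrow> pmc k = (k - 1) * pmc (k - 2)"
proof (cases k)
  case (Suc j) then show ?thesis by (cases j) auto
qed auto

lemma count_bound:
  "finite V \<Longrightarrow> S \<subseteq> U \<Longrightarrow> U \<subseteq> V \<Longrightarrow>
   real (card {f \<in> pm V. f ` S \<subseteq> U}) \<le> (real (card U) / real (card V)) ^ ((card S + 1) div 2) * real (card (pm V))"
proof (induction "card V" arbitrary: V S U rule: less_induct)
  case less
  note V = less.prems(1) and SU = less.prems(2) and UV = less.prems(3)
  have finS: "finite U" "finite S" using finite_subset[OF UV V] finite_subset[OF SU] by auto
  show ?case
  proof (cases "S = {}")
    case True then show ?thesis by simp
  next
    case False
    then obtain x where xS: "x \<in> S" by blast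
    have xU: "x \<in> U" and xV: "x \<in> V" using xS SU UV by auto
    define h where "h = (card S + 1) div 2"
    define u where "u = real (card U)"
    define nv where "nv = real (card V)"
    define c where "c = pmc (card V - 2)"
    have fin: "finite (pm W)" if "W \<subseteq> V" for W
      by (rule finite_pm) (rule finite_subset[OF that V])
    have eq: "{f \<in> pm V. f ` S \<subseteq> U} = (\<Union>y\<in>U - {x}. {f \<in> pm V. f x = y \<and> f ` S \<subseteq> U})"
      using xS xV by (auto simp: pm_def image_subset_iff)
    have each: "real (card {f \<in> pm V. f x = y \<and> f ` S \<subseteq> U}) \<le> (u / nv) ^ (h - 1) * c"
      if y: "y \<in> U - {x}" for y
    proof -
      have yV: "y \<in> V" "y \<noteq> x" using y UV by auto
      let ?A = "{f \<in> pm V. f x = y \<and> f ` S \<subseteq> U}"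
      let ?B = "{g \<in> pm (V - {x,y}). g ` (S - {x,y}) \<subseteq> U - {x,y}}"
      have inj: "inj_on (\<lambda>f. f(x := x, y := y)) ?A"
        using bij_betw_imp_inj_on[OF pm_split_bij[OF xV yV]] by (rule inj_on_subset) auto
      have img: "(\<lambda>f. f(x := x, y := y)) ` ?A \<subseteq> ?B"
      proof
        fix g assume "g \<in> (\<lambda>f. f(x := x, y := y)) ` ?A"
        then obtain f where f: "f \<in> ?A" and g: "g = f(x := x, y := y)" by blast
        have "g \<in> pm (V - {x,y})" using bij_betwE[OF pm_split_bij[OF xV yV]] f g by auto
        moreover have "g ` (S - {x,y}) \<subseteq> U - {x,y}"
        proof
          fix w assume "w \<in> g ` (S - {x,y})"
          then obtain z where z: "z \<in> S - {x,y}" and w: "w = g z" by blast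
          have "f z \<noteq> x \<and> f z \<noteq> y" using pm_other[of f V x y z] f z xV SU UV by auto
          moreover have "f z \<in> U" using f z by auto
          ultimately show "w \<in> U - {x,y}" using w g z by auto
        qed
        ultimately show "g \<in> ?B" by blast
      qed
      have "card ?A \<le> card ?B"
        by (rule card_inj_on_le[OF inj img]) (use fin[of "V - {x,y}"] in auto)
      hence "real (card ?A) \<le> real (card ?B)" by simp
      also have "\<dots> \<le> (real (card (U - {x,y})) / real (card (V - {x,y}))) ^ ((card (S - {x,y}) + 1) div 2)
                      * real (card (pm (V - {x,y})))"
      proof (rule less.hyps)
        show "card (V - {x,y}) < card V" by (rule psubset_card_mono) (use V xV in auto)
      qed (use V SU UV in auto)
      also have "\<dots> \<le> (u / nv) ^ (h - 1) * c"
      proof (rule mult_mono)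
        have c2: "card {x,y} = 2" using yV by simp
        have sU: "{x,y} \<subseteq> U" using xU y by auto
        have sV: "{x,y} \<subseteq> V" using xV yV by auto
        have "card {x,y} \<le> card U" using sU finS by (intro card_mono) auto
        then have cU: "card (U - {x,y}) + 2 = card U" using sU c2 by (simp add: card_Diff_subset)
        have "card {x,y} \<le> card V" using sV V by (intro card_mono) auto
        then have cV: "card (V - {x,y}) + 2 = card V" using sV c2 by (simp add: card_Diff_subset)
        have "card (S \<inter> {x,y}) \<le> card {x,y}" by (intro card_mono) auto
        then have "card (S \<inter> {x,y}) \<le> 2" using c2 by simp
        then have cS: "card S \<le> card (S - {x,y}) + 2"
          using card_Diff_subset_Int[of S "{x,y}"] by simp
        have hh: "h - 1 \<le> (card (S - {x,y}) + 1) div 2" unfolding h_def using cS by linarith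
        have uv: "card (U - {x,y}) \<le> card (V - {x,y})" using UV V by (intro card_mono) auto
        show "(real (card (U - {x,y})) / real (card (V - {x,y}))) ^ ((card (S - {x,y}) + 1) div 2) \<le> (u / nv) ^ (h - 1)"
        proof -
          have e1: "u = real (card (U - {x,y})) + 2" unfolding u_def using cU[symmetric] by simp
          have e2: "nv = real (card (V - {x,y})) + 2" unfolding nv_def using cV[symmetric] by simp
          show ?thesis unfolding e1 e2
            by (rule ratio_step) (use uv hh in auto)
        qed
        have cV2: "card (V - {x,y}) = card V - 2" using cV by arith
        have "card (pm (V - {x,y})) = c" unfolding c_def using card_pm[of "V - {x,y}"] V cV2
          by simp
        then show "real (card (pm (V - {x,y}))) \<le> real c" by simp
      qed (auto simp: u_def nv_def)
      finally show ?thesis .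
    qed
    have "real (card {f \<in> pm V. f ` S \<subseteq> U}) \<le> real (\<Sum>y\<in>U - {x}. card {f \<in> pm V. f x = y \<and> f ` S \<subseteq> U})"
    proof -
      have "card {f \<in> pm V. f ` S \<subseteq> U} \<le> (\<Sum>y\<in>U - {x}. card {f \<in> pm V. f x = y \<and> f ` S \<subseteq> U})"
        unfolding eq by (rule card_UN_le) (use finS in simp)
      then show ?thesis by (simp only: of_nat_le_iff)
    qed
    also have "\<dots> \<le> (\<Sum>y\<in>U - {x}. (u / nv) ^ (h - 1) * c)"
      unfolding of_nat_sum by (rule sum_mono) (rule each)
    also have "\<dots> = (u - 1) * (u / nv) ^ (h - 1) * c"
    proof -
      have "card U \<ge> 1" using xU finS by (simp add: Suc_le_eq card_gt_0_iff) blast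
      then have "real (card (U - {x})) = u - 1" unfolding u_def using xU finS by (simp add: of_nat_diff)
      then show ?thesis by simp
    qed
    also have "\<dots> \<le> (u / nv) ^ h * ((nv - 1) * c)"
    proof -
      have "card S \<ge> 1" using False finS by (simp add: Suc_le_eq card_gt_0_iff)
      then have h1: "h \<ge> 1" unfolding h_def by linarith
      have un: "1 \<le> u" "u \<le> nv" unfolding u_def nv_def using xU finS UV V card_mono
        by (auto simp: Suc_le_eq card_gt_0_iff)
      have "u - 1 \<le> (u / nv) * (nv - 1)" using un by (simp add: field_simps)
      then have "(u - 1) * ((u / nv) ^ (h - 1) * c) \<le> ((u / nv) * (nv - 1)) * ((u / nv) ^ (h - 1) * c)"
        using un by (intro mult_right_mono) auto
      also have "\<dots> = (u / nv) ^ h * ((nv - 1) * c)"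
      proof -
        obtain h0 where "h = Suc h0" using h1 by (cases h) auto
        then show ?thesis by (simp add: algebra_simps)
      qed
      finally show ?thesis by (simp add: mult.assoc)
    qed
    also have "\<dots> = (u / nv) ^ h * real (card (pm V))"
    proof -
      have c1: "1 \<le> card V" using xV V by (simp add: Suc_le_eq card_gt_0_iff) blast
      have "card (pm V) = pmc (card V)" using card_pm V by blast
      also have "\<dots> = (card V - 1) * c"
        using c1 unfolding c_def by (rule pmc_rec)
      finally have "real (card (pm V)) = (nv - 1) * c" unfolding nv_def using c1
        by (simp add: of_nat_diff)
      then show ?thesis by simp
    qed
    finally show ?thesis unfolding h_def u_def nv_def .
  qed
qed



lemma pow_fact: "real s ^ s \<le> 3 ^ s * fact s"
proof (induction s)
  case 0 then show ?case by simp
next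
  case (Suc s)
  have key: "real (Suc s) ^ s \<le> 3 * real s ^ s"
  proof (cases "s = 0")
    case True then show ?thesis by simp
  next
    case False
    then have sp: "s > 0" by simp
    have "(1 + 1 / real s) ^ s \<le> exp 1"
      by (rule exp_ge_one_plus_x_over_n_power_n) (use sp in auto)
    also have "\<dots> \<le> 3" by (rule exp_le)
    finally have "(1 + 1 / real s) ^ s \<le> 3" .
    moreover have "(1 + 1 / real s) ^ s = real (Suc s) ^ s / real s ^ s"
      using sp by (simp add: field_simps power_divide)
    ultimately show ?thesis using sp by (simp add: field_simps)
  qed
  have "real (Suc s) ^ Suc s = real (Suc s) * real (Suc s) ^ s" by simp
  also have "\<dots> \<le> real (Suc s) * (3 * real s ^ s)"
    using key by (intro mult_left_mono) auto
  also have "\<dots> \<le> real (Suc s) * (3 * (3 ^ s * fact s))"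
    using Suc.IH by (intro mult_left_mono) auto
  also have "\<dots> = 3 ^ Suc s * fact (Suc s)" by (simp add: algebra_simps)
  finally show ?case .
qed

lemma choose_bound:
  assumes "k \<ge> 1"
  shows "real (n choose k) \<le> (3 * real n / real k) ^ k"
proof -
  have "real (n choose k) * fact k \<le> real n ^ k"
    using binomial_fact_pow[of n k] by (metis of_nat_fact of_nat_le_iff of_nat_mult of_nat_power)
  then have "real (n choose k) \<le> real n ^ k / fact k"
    by (simp add: field_simps)
  also have "\<dots> \<le> real n ^ k * 3 ^ k / real k ^ k"
  proof -
    have kp: "real k ^ k > 0" using assms by simp
    have "real n ^ k * real k ^ k \<le> real n ^ k * (3 ^ k * fact k)"
      using pow_fact[of k] by (intro mult_left_mono) auto
    then show ?thesis using kp by (simp add: field_simps)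
  qed
  also have "\<dots> = (3 * real n / real k) ^ k" by (simp add: power_mult_distrib power_divide)
  finally show ?thesis .
qed

lemma pow_combine: "(a::real) ^ s * b ^ (2 * s) * c ^ (5 * s) = (a * b ^ 2 * c ^ 5) ^ s"
  by (simp add: power_mult power_mult_distrib)

lemma term_bound:
  assumes s: "1 \<le> s" "2 * s \<le> n"
  shows "real (n choose s) * real (n choose (2 * s)) * (real (2 * s) / real n) ^ (10 * ((s + 1) div 2))
         \<le> (216 * real s ^ 2 / real n ^ 2) ^ s"
proof -
  have np: "real n > 0" using s by simp
  have r0: "0 \<le> real (2 * s) / real n" and r1: "real (2 * s) / real n \<le> 1" using s np by auto
  have "(real (2 * s) / real n) ^ (10 * ((s + 1) div 2)) \<le> (real (2 * s) / real n) ^ (5 * s)"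
    by (rule power_decreasing) (use r0 r1 in \<open>auto\<close>)
  have e: "(real (2 * s) / real n) ^ (10 * ((s + 1) div 2)) \<le> (real (2 * s) / real n) ^ (5 * s)"
    by (rule power_decreasing) (use r0 r1 in \<open>linarith\<close>)+
  have c1: "real (n choose s) \<le> (3 * real n / real s) ^ s" by (rule choose_bound) (use s in simp)
  have c2: "real (n choose (2 * s)) \<le> (3 * real n / real (2 * s)) ^ (2 * s)" by (rule choose_bound) (use s in simp)
  have "real (n choose s) * real (n choose (2 * s)) * (real (2 * s) / real n) ^ (10 * ((s + 1) div 2))
        \<le> (3 * real n / real s) ^ s * (3 * real n / real (2 * s)) ^ (2 * s) * (real (2 * s) / real n) ^ (5 * s)"
    by (intro mult_mono c1 c2 e) auto
  also have "\<dots> = ((3 * real n / real s) * (3 * real n / real (2 * s)) ^ 2 * (real (2 * s) / real n) ^ 5) ^ s"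
    by (rule pow_combine)
  also have "(3 * real n / real s) * (3 * real n / real (2 * s)) ^ 2 * (real (2 * s) / real n) ^ 5
             = 216 * real s ^ 2 / real n ^ 2"
    using s np by (simp add: field_simps power2_eq_square power_def)
  finally show ?thesis .
qed

lemma geo_bound:
  fixes q :: real
  assumes "0 \<le> q" "q \<le> 1/2"
  shows "(\<Sum>s\<in>{1..N}. q ^ s) \<le> 2 * q"
proof (cases "q = 0")
  case True then show ?thesis by (simp add: power_0_left)
next
  case False
  then have q: "0 < q" "q < 1" using assms by auto
  have "(\<Sum>s\<in>{0..N}. q ^ s) < 1 / (1 - q)" by (rule geometric_sum_less) (use q in auto)
  moreover have "(\<Sum>s\<in>{0..N}. q ^ s) = 1 + (\<Sum>s\<in>{1..N}. q ^ s)"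
    by (simp add: sum.atLeast_Suc_atMost)
  ultimately have "(\<Sum>s\<in>{1..N}. q ^ s) < 1 / (1 - q) - 1" by simp
  also have "1 / (1 - q) - 1 = q / (1 - q)" using q by (simp add: field_simps)
  also have "\<dots> \<le> 2 * q" using q assms by (simp add: field_simps)
  finally show ?thesis by simp
qed



lemma finite_Omega: "finite (matching_tuples n)"
  unfolding matching_tuples_def pm_pm by (intro finite_PiE finite_pm) auto

lemma card_Omega: "card (matching_tuples n) = card (pm {..<n}) ^ 10"
  unfolding matching_tuples_def pm_pm by (simp add: card_PiE)

lemma pm_ne: assumes "even n" shows "pm {..<n} \<noteq> {}"
proof -
  define f where "f = (\<lambda>x::nat. if x < n then (if even x then x + 1 else x - 1) else x)"
  have "f \<in> pm {..<n}"
  proof -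
    have "x + 1 < n" if "x < n" "even x" for x using that assms
      by (metis Suc_eq_plus1 Suc_lessI even_Suc)
    moreover have "x - 1 < n" if "x < n" for x using that by simp
    moreover have "x \<noteq> 0" if "odd x" for x using that by auto
    moreover have "x - 1 \<noteq> x" if "odd x" for x :: nat using that by (cases x) auto
    ultimately show ?thesis unfolding pm_def f_def by auto
  qed
  then show ?thesis by blast
qed

lemma Omega_ne: "even n \<Longrightarrow> matching_tuples n \<noteq> {}"
  unfolding matching_tuples_def pm_pm using pm_ne by (simp add: PiE_eq_empty_iff)

definition EV :: "nat \<Rightarrow> nat set \<Rightarrow> nat set \<Rightarrow> (nat \<Rightarrow> nat \<Rightarrow> nat) set" where
  "EV n S U = {M \<in> matching_tuples n. \<forall>i<10. M i ` S \<subseteq> U}"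

lemma EV_eq: "EV n S U = PiE {..<10} (\<lambda>_. {f \<in> pm {..<n}. f ` S \<subseteq> U})"
  unfolding EV_def matching_tuples_def pm_pm by (auto simp: PiE_iff extensional_def image_subset_iff)

lemma pow_pow10: "((a::real) ^ h) ^ 10 = a ^ (10 * h)"
  by (metis power_mult mult.commute)

lemma card_EV:
  assumes "S \<subseteq> U" "U \<subseteq> {..<n}"
  shows "real (card (EV n S U)) \<le> (real (card U) / real n) ^ (10 * ((card S + 1) div 2)) * real (card (matching_tuples n))"
proof -
  let ?h = "(card S + 1) div 2"
  have "real (card (EV n S U)) = real (card {f \<in> pm {..<n}. f ` S \<subseteq> U}) ^ 10"
    unfolding EV_eq by (simp add: card_PiE)
  also have "\<dots> \<le> ((real (card U) / real n) ^ ?h * real (card (pm {..<n}))) ^ 10"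
    using count_bound[of "{..<n}" S U] assms by (intro power_mono) auto
  also have "\<dots> = (real (card U) / real n) ^ (10 * ?h) * real (card (matching_tuples n))"
    unfolding card_Omega by (simp add: power_mult_distrib pow_pow10)
  finally show ?thesis .
qed

definition SS :: "nat \<Rightarrow> nat \<Rightarrow> nat set set" where
  "SS n s = {S. S \<subseteq> {..<n} \<and> card S = s}"

definition UU :: "nat \<Rightarrow> nat set \<Rightarrow> nat \<Rightarrow> nat set set" where
  "UU n S s = {U. S \<subseteq> U \<and> U \<subseteq> {..<n} \<and> card U = 2 * s}"

definition Bad :: "nat \<Rightarrow> nat \<Rightarrow> (nat \<Rightarrow> nat \<Rightarrow> nat) set" where
  "Bad n smax = (\<Union>s\<in>{1..smax}. \<Union>S\<in>SS n s. \<Union>U\<in>UU n S s. EV n S U)"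

lemma finite_SS: "finite (SS n s)"
  unfolding SS_def by (rule finite_subset[of _ "Pow {..<n}"]) auto

lemma finite_UU: "finite (UU n S s)"
  unfolding UU_def by (rule finite_subset[of _ "Pow {..<n}"]) auto

lemma card_SS: "card (SS n s) = n choose s"
  unfolding SS_def using n_subsets[of "{..<n}" s] by simp

lemma card_UU: "card (UU n S s) \<le> n choose (2 * s)"
proof -
  have "card (UU n S s) \<le> card {U. U \<subseteq> {..<n} \<and> card U = 2 * s}"
    by (rule card_mono) (auto simp: UU_def intro: finite_subset[of _ "Pow {..<n}"])
  also have "\<dots> = n choose (2 * s)" using n_subsets[of "{..<n}" "2 * s"] by simp
  finally show ?thesis .
qed

lemma Bad_bound:
  assumes n: "0 < n" and sm: "2 * smax \<le> n" and q: "216 * real smax / real n \<le> 1/2"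
  shows "real (card (Bad n smax)) \<le> 2 * (216 * real smax / real n) * real (card (matching_tuples n))"
proof -
  define q where "q = 216 * real smax / real n"
  define Om where "Om = real (card (matching_tuples n))"
  have q0: "0 \<le> q" unfolding q_def by simp
  have "card (Bad n smax) \<le> (\<Sum>s\<in>{1..smax}. card (\<Union>S\<in>SS n s. \<Union>U\<in>UU n S s. EV n S U))"
    unfolding Bad_def by (rule card_UN_le) simp
  also have "\<dots> \<le> (\<Sum>s\<in>{1..smax}. \<Sum>S\<in>SS n s. card (\<Union>U\<in>UU n S s. EV n S U))"
    by (intro sum_mono card_UN_le finite_SS)
  also have "\<dots> \<le> (\<Sum>s\<in>{1..smax}. \<Sum>S\<in>SS n s. \<Sum>U\<in>UU n S s. card (EV n S U))"
    by (intro sum_mono card_UN_le finite_UU)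
  finally have "real (card (Bad n smax)) \<le> (\<Sum>s\<in>{1..smax}. \<Sum>S\<in>SS n s. \<Sum>U\<in>UU n S s. real (card (EV n S U)))"
    by (metis (no_types, lifting) of_nat_le_iff of_nat_sum sum.cong)
  also have "\<dots> \<le> (\<Sum>s\<in>{1..smax}. q ^ s * Om)"
  proof (rule sum_mono)
    fix s assume s: "s \<in> {1..smax}"
    define X where "X = (real (2 * s) / real n) ^ (10 * ((s + 1) div 2)) * Om"
    have X0: "0 \<le> X" unfolding X_def Om_def by simp
    have "(\<Sum>S\<in>SS n s. \<Sum>U\<in>UU n S s. real (card (EV n S U))) \<le> (\<Sum>S\<in>SS n s. \<Sum>U\<in>UU n S s. X)"
    proof (intro sum_mono)
      fix S U assume S: "S \<in> SS n s" and U: "U \<in> UU n S s"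
      have "card S = s" "card U = 2 * s" "S \<subseteq> U" "U \<subseteq> {..<n}" using S U by (auto simp: SS_def UU_def)
      then show "real (card (EV n S U)) \<le> X" unfolding X_def Om_def using card_EV[of S U n] by simp
    qed
    also have "\<dots> = (\<Sum>S\<in>SS n s. real (card (UU n S s)) * X)" by simp
    also have "\<dots> \<le> (\<Sum>S\<in>SS n s. real (n choose (2 * s)) * X)"
      using card_UU X0 by (intro sum_mono mult_right_mono) auto
    also have "\<dots> = real (n choose s) * real (n choose (2 * s)) * X" by (simp add: card_SS)
    also have "\<dots> = (real (n choose s) * real (n choose (2 * s)) * (real (2 * s) / real n) ^ (10 * ((s + 1) div 2))) * Om"
      unfolding X_def by (simp add: mult.assoc)
    also have "\<dots> \<le> (216 * real s ^ 2 / real n ^ 2) ^ s * Om"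
      using s sm by (intro mult_right_mono term_bound) (auto simp: Om_def)
    also have "\<dots> \<le> q ^ s * Om"
    proof (intro mult_right_mono power_mono)
      have "real s ^ 2 \<le> real smax * real n"
        using s sm unfolding power2_eq_square by (intro mult_mono) auto
      then have "216 * real s ^ 2 / real n ^ 2 \<le> 216 * (real smax * real n) / real n ^ 2"
        using n by (intro divide_right_mono) auto
      also have "\<dots> = q" unfolding q_def using n by (simp add: power2_eq_square)
      finally show "216 * real s ^ 2 / real n ^ 2 \<le> q" .
    qed (auto simp: Om_def)
    finally show "(\<Sum>S\<in>SS n s. \<Sum>U\<in>UU n S s. real (card (EV n S U))) \<le> q ^ s * Om" .
  qed
  also have "\<dots> = (\<Sum>s\<in>{1..smax}. q ^ s) * Om" by (simp add: sum_distrib_right)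
  also have "\<dots> \<le> 2 * q * Om"
    using geo_bound[of q smax] q0 q unfolding q_def[symmetric] by (intro mult_right_mono) (auto simp: Om_def)
  finally show ?thesis unfolding q_def Om_def .
qed



definition nbh :: "nat \<Rightarrow> (nat \<Rightarrow> nat \<Rightarrow> nat) \<Rightarrow> nat set \<Rightarrow> nat set" where
  "nbh n M S = {u. \<exists>w\<in>S. (w, u) \<in> Id_on {..<n} \<union> edges n M}"

lemma ball_0: "T \<subseteq> {..<n} \<Longrightarrow> ball n M T 0 = T"
  unfolding ball_def by auto

lemma ball_Suc: "ball n M T (Suc i) = nbh n M (ball n M T i)"
  unfolding ball_def nbh_def by (auto simp: edges_def Id_on_def relcomp_unfold)

lemma ball_sub: "ball n M T i \<subseteq> {..<n}"
  unfolding ball_def by auto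

lemma nbh_sub: "nbh n M S \<subseteq> {..<n}"
  unfolding nbh_def edges_def by auto

lemma nbh_self: "S \<subseteq> {..<n} \<Longrightarrow> S \<subseteq> nbh n M S"
  unfolding nbh_def by auto

lemma nbh_img:
  assumes M: "M \<in> matching_tuples n" and S: "S \<subseteq> {..<n}" and i: "i < 10"
  shows "M i ` S \<subseteq> nbh n M S"
proof
  fix v assume "v \<in> M i ` S"
  then obtain w where w: "w \<in> S" "v = M i w" by blast
  have "M i \<in> pm {..<n}" using M i unfolding matching_tuples_def pm_pm by auto
  then have "M i w < n" using w S unfolding pm_def by auto
  then show "v \<in> nbh n M S" using w S i unfolding nbh_def edges_def by auto
qed

lemma extend_set:
  assumes "A \<subseteq> B" "finite B" "card A \<le> k" "k \<le> card B"
  shows "\<exists>U. A \<subseteq> U \<and> U \<subseteq> B \<and> card U = k"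
proof -
  have fA: "finite A" using assms finite_subset by blast
  have "k - card A \<le> card (B - A)" using assms fA by (simp add: card_Diff_subset)
  then obtain W where W: "W \<subseteq> B - A" "card W = k - card A" "finite W"
    by (rule obtain_subset_with_card_n)
  have "card (A \<union> W) = card A + card W" using W fA by (intro card_Un_disjoint) auto
  then show ?thesis using W assms by (intro exI[of _ "A \<union> W"]) auto
qed

lemma good:
  assumes M: "M \<in> matching_tuples n" and nb: "M \<notin> Bad n smax" and sm: "2 * smax \<le> n"
    and S: "S \<subseteq> {..<n}" "1 \<le> card S" "card S \<le> smax"
  shows "2 * card S \<le> card (nbh n M S)"
proof (rule ccontr)
  assume "\<not> 2 * card S \<le> card (nbh n M S)"
  then have lt: "card (nbh n M S) \<le> 2 * card S" by simp
  obtain U where U: "nbh n M S \<subseteq> U" "U \<subseteq> {..<n}" "card U = 2 * card S"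
    using extend_set[OF nbh_sub[of n M S] _ lt] S sm by auto
  have inEV: "M \<in> EV n S U"
    unfolding EV_def using M nbh_img[OF M S(1)] U by blast
  have inS: "S \<in> SS n (card S)" using S unfolding SS_def by auto
  have inU: "U \<in> UU n S (card S)" using U nbh_self[OF S(1), of M] unfolding UU_def by auto
  have cs: "card S \<in> {1..smax}" using S by simp
  have "M \<in> Bad n smax" unfolding Bad_def
    by (rule UN_I[OF cs], rule UN_I[OF inS], rule UN_I[OF inU], rule inEV)
  then show False using nb by simp
qed

lemma growth:
  assumes M: "M \<in> matching_tuples n" and nb: "M \<notin> Bad n (2 * m)" and sm: "4 * m \<le> n"
    and T: "T \<subseteq> {..<n}" "card T = k" "1 \<le> k"
  shows "min (2 * m) (2 ^ i * k) \<le> card (ball n M T i)"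
proof (induction i)
  case 0 then show ?case using ball_0[OF T(1)] T by simp
next
  case (Suc i)
  let ?B = "ball n M T i"
  have fin: "finite (nbh n M ?B)" by (rule finite_subset[OF nbh_sub]) simp
  show ?case
  proof (cases "2 * m \<le> card ?B")
    case True
    have "card ?B \<le> card (nbh n M ?B)"
      by (intro card_mono fin nbh_self ball_sub)
    then have "2 * m \<le> card (ball n M T (Suc i))" using True ball_Suc by simp
    then show ?thesis by linarith
  next
    case False
    then have c: "2 ^ i * k \<le> card ?B" using Suc.IH by simp
    have "1 \<le> 2 ^ i * k" using T(3) by simp
    then have "1 \<le> card ?B" using c by linarith
    then have "2 * card ?B \<le> card (nbh n M ?B)"
      using good[OF M nb _ ball_sub] sm False by simp
    then show ?thesis using c ball_Suc by (simp add: min.coboundedI2)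
  qed
qed



lemma asym:
  fixes \<alpha> B :: real
  assumes a: "0 < \<alpha>" "\<alpha> < 1" and B: "0 < B"
  shows "\<exists>X0. \<forall>x\<ge>X0. B \<le> x powr \<alpha> \<and> 1 \<le> x - x powr \<alpha>"
proof (intro exI allI impI)
  fix x :: real
  assume x: "max (max 2 (B powr (1/\<alpha>))) (2 powr (1/(1-\<alpha>))) \<le> x"
  have x2: "2 \<le> x" using x by simp
  have "B = (B powr (1/\<alpha>)) powr \<alpha>" using a B by (simp add: powr_powr)
  also have "\<dots> \<le> x powr \<alpha>" using x a by (intro powr_mono2) auto
  finally have 1: "B \<le> x powr \<alpha>" .
  have "2 = (2 powr (1/(1-\<alpha>))) powr (1-\<alpha>)" using a by (simp add: powr_powr)
  also have "\<dots> \<le> x powr (1-\<alpha>)" using x a by (intro powr_mono2) auto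
  finally have 2: "2 \<le> x powr (1-\<alpha>)" .
  have "x powr (1 - (1 - \<alpha>)) = x powr 1 / x powr (1 - \<alpha>)" by (rule powr_diff)
  then have "x powr \<alpha> = x powr 1 / x powr (1 - \<alpha>)" by simp
  also have "\<dots> = x / x powr (1 - \<alpha>)" using x2 by simp
  also have "\<dots> \<le> x / 2" using 2 x2 by (intro divide_left_mono) auto
  finally have "x powr \<alpha> \<le> x / 2" .
  then have "1 \<le> x - x powr \<alpha>" using x2 by simp
  with 1 show "B \<le> x powr \<alpha> \<and> 1 \<le> x - x powr \<alpha>" by simp
qed

lemma alpha_bounds:
  assumes "0 < \<epsilon>" "\<epsilon> < 1"
  shows "0 < alpha \<epsilon>" "alpha \<epsilon> < 1"
proof -
  have a5: "log 2 5 > 0" by simp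
  have d: "log 2 5 + 1 - \<epsilon> > log 2 5" using assms by simp
  show "0 < alpha \<epsilon>" unfolding alpha_def using a5 d by (intro divide_pos_pos) linarith+
  have den: "0 < log 2 5 + 1 - \<epsilon>" using a5 assms by linarith
  show "alpha \<epsilon> < 1" unfolding alpha_def by (subst divide_less_eq_1_pos[OF den]) (use d in linarith)
qed

theorem lemma3p4:
  shows "\<exists>\<epsilon>0>0. \<forall>\<epsilon>. 0 < \<epsilon> \<and> \<epsilon> < \<epsilon>0 \<longrightarrow>
    (\<exists>C>0. \<forall>\<delta>>0. \<exists>N. \<forall>n\<ge>N. even n \<longrightarrow>
      (\<forall>T. T \<subseteq> {..<n} \<and> card T = num_terminals \<epsilon> n \<longrightarrow>
        measure_pmf.prob (random_graph n)
          {M. (\<exists>i. card (ball n M T i) \<ge> 2 * m_param \<epsilon> n) \<and>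
              real_of_int (r_param \<epsilon> n M T) \<le> C * (log 2 (real n)) powr alpha \<epsilon>}
        \<ge> 1 - \<delta>))"
proof (rule exI[of _ "1::real"], intro conjI allI impI)
  show "(0::real) < 1" by simp
  fix \<epsilon> :: real assume \<epsilon>: "0 < \<epsilon> \<and> \<epsilon> < 1"
  define \<alpha> where "\<alpha> = alpha \<epsilon>"
  have \<alpha>0: "0 < \<alpha>" and \<alpha>1: "\<alpha> < 1" unfolding \<alpha>_def using alpha_bounds \<epsilon> by auto
  show "\<exists>C>0. \<forall>\<delta>>0. \<exists>N. \<forall>n\<ge>N. even n \<longrightarrow>
      (\<forall>T. T \<subseteq> {..<n} \<and> card T = num_terminals \<epsilon> n \<longrightarrow>
        measure_pmf.prob (random_graph n)
          {M. (\<exists>i. card (ball n M T i) \<ge> 2 * m_param \<epsilon> n) \<and>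
              real_of_int (r_param \<epsilon> n M T) \<le> C * (log 2 (real n)) powr alpha \<epsilon>}
        \<ge> 1 - \<delta>)"
  proof (rule exI[of _ "2::real"], intro conjI allI impI)
    show "(0::real) < 2" by simp
    fix \<delta> :: real assume \<delta>: "0 < \<delta>"
    define B where "B = max 8640 (8640 / \<delta>)"
    have B0: "0 < B" unfolding B_def by simp
    obtain X0 where X0: "\<And>x. x \<ge> X0 \<Longrightarrow> B \<le> x powr \<alpha> \<and> 1 \<le> x - x powr \<alpha>"
      using asym[OF \<alpha>0 \<alpha>1 B0] by blast
    define N where "N = nat \<lceil>2 powr X0\<rceil> + 1"
    show "\<exists>N. \<forall>n\<ge>N. even n \<longrightarrow>
      (\<forall>T. T \<subseteq> {..<n} \<and> card T = num_terminals \<epsilon> n \<longrightarrow>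
        measure_pmf.prob (random_graph n)
          {M. (\<exists>i. card (ball n M T i) \<ge> 2 * m_param \<epsilon> n) \<and>
              real_of_int (r_param \<epsilon> n M T) \<le> 2 * (log 2 (real n)) powr alpha \<epsilon>}
        \<ge> 1 - \<delta>)"
    proof (rule exI[of _ N], intro allI impI)
      fix n :: nat and T :: "nat set"
      assume nN: "N \<le> n" and ev: "even n" and T: "T \<subseteq> {..<n} \<and> card T = num_terminals \<epsilon> n"
      define x where "x = log 2 (real n)"
      define L where "L = x powr \<alpha>"
      define k where "k = num_terminals \<epsilon> n"
      define m where "m = m_param \<epsilon> n"
      define E where "E = {M. (\<exists>i. card (ball n M T i) \<ge> 2 * m_param \<epsilon> n) \<and>
              real_of_int (r_param \<epsilon> n M T) \<le> 2 * (log 2 (real n)) powr alpha \<epsilon>}"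
      define \<Omega> where "\<Omega> = matching_tuples n"
      have npos: "0 < real n" using nN unfolding N_def by simp
      have "2 powr X0 \<le> real n"
      proof -
        have "2 powr X0 \<le> real (nat \<lceil>2 powr X0\<rceil>)" by linarith
        also have "\<dots> \<le> real n" using nN unfolding N_def by simp
        finally show ?thesis .
      qed
      then have xX0: "X0 \<le> x" unfolding x_def using npos by (simp add: le_log_iff)
      have LB: "B \<le> L" and xL: "1 \<le> x - L" using X0[OF xX0] unfolding L_def by auto
      have L8640: "8640 \<le> L" and Ld: "8640 / \<delta> \<le> L" using LB unfolding B_def by auto
      have Lpos: "0 < L" using L8640 by simp
      have Ldelta: "8640 / L \<le> \<delta>"
        using Ld \<delta> Lpos by (simp add: field_simps)
      have Ln: "L = log 2 (real n) powr alpha \<epsilon>" unfolding L_def x_def \<alpha>_def ..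
      have pow_le: "2 powr (L + 1) \<le> real n"
      proof -
        have "2 powr (L + 1) \<le> 2 powr x" using xL by (intro powr_mono) auto
        also have "\<dots> = real n" unfolding x_def using npos by simp
        finally show ?thesis .
      qed
      have powL: "2 powr (L + 1) = 2 * 2 powr L" by (simp add: powr_add)
      define y where "y = real n / 2 powr L"
      have y2: "2 \<le> y" unfolding y_def using pow_le powL by (simp add: field_simps)
      have kdef: "k = nat \<lfloor>y\<rfloor>" unfolding k_def num_terminals_def y_def Ln ..
      have ky: "y - 1 \<le> real k" unfolding kdef using y2 by linarith
      have k1: "1 \<le> k" using ky y2 by simp
      have mdef: "m = nat \<lfloor>10 * real n / L\<rfloor>" unfolding m_def m_param_def Ln ..
      have mL: "real m \<le> 10 * real n / L" unfolding mdef using Lpos npos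
        by (simp add: divide_nonneg_nonneg)
      have m4: "4 * m \<le> n"
      proof -
        have "real (4 * m) \<le> 40 * real n / L" using mL by simp
        also have "\<dots> \<le> real n" using L8640 npos by (simp add: field_simps)
        finally show ?thesis by linarith
      qed
      have qb: "216 * real (2 * m) / real n \<le> 4320 / L"
        using mL npos Lpos by (simp add: field_simps)
      have q2: "216 * real (2 * m) / real n \<le> 1 / 2"
      proof -
        have "4320 / L \<le> 1 / 2" using L8640 Lpos by (simp add: field_simps)
        then show ?thesis using qb by linarith
      qed
      have bad: "real (card (Bad n (2 * m))) \<le> \<delta> * real (card \<Omega>)"
      proof -
        have "real (card (Bad n (2 * m))) \<le> 2 * (216 * real (2 * m) / real n) * real (card \<Omega>)"
          unfolding \<Omega>_def using Bad_bound[of n "2 * m"] npos m4 q2 by simp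
        also have "\<dots> \<le> \<delta> * real (card \<Omega>)"
        proof (rule mult_right_mono)
          show "2 * (216 * real (2 * m) / real n) \<le> \<delta>" using qb Ldelta by simp
        qed simp
        finally show ?thesis .
      qed
      have sub: "\<Omega> - Bad n (2 * m) \<subseteq> \<Omega> \<inter> E"
      proof
        fix M assume M: "M \<in> \<Omega> - Bad n (2 * m)"
        define i0 where "i0 = nat \<lceil>L\<rceil> + 1"
        have cL1: "real (nat \<lceil>L\<rceil>) = real_of_int \<lceil>L\<rceil>" using Lpos by simp
        have cL2: "L \<le> real_of_int \<lceil>L\<rceil>" "real_of_int \<lceil>L\<rceil> < L + 1" by linarith+
        have gr: "min (2 * m) (2 ^ i0 * k) \<le> card (ball n M T i0)"
          using growth[of M n m T k i0] M T m4 k1 unfolding \<Omega>_def k_def by auto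
        have "2 * m \<le> 2 ^ i0 * k"
        proof -
          have "2 powr (L + 1) \<le> 2 powr (real i0)" unfolding i0_def using cL1 cL2 by (intro powr_mono) auto
          also have "\<dots> = 2 ^ i0" by (simp add: powr_realpow)
          finally have p: "2 powr (L + 1) \<le> 2 ^ i0" .
          have "real n \<le> 2 * real n - 2 powr (L + 1)" using pow_le by simp
          also have "\<dots> = 2 powr (L + 1) * (y - 1)" unfolding y_def powL by (simp add: field_simps)
          also have "\<dots> \<le> 2 ^ i0 * real k"
            using p ky y2 by (intro mult_mono) auto
          finally have "real n \<le> 2 ^ i0 * real k" .
          moreover have "real (2 * m) \<le> real n"
            using m4 by simp
          ultimately have "real (2 * m) \<le> real (2 ^ i0 * k)" by simp
          then show ?thesis by linarith
        qed
        then have big: "2 * m_param \<epsilon> n \<le> card (ball n M T i0)" using gr unfolding m_def by simp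
        have le: "(LEAST i. 2 * m_param \<epsilon> n \<le> card (ball n M T i)) \<le> i0"
          by (rule Least_le) (rule big)
        have "real_of_int (r_param \<epsilon> n M T) \<le> real i0 - 1"
          unfolding r_param_def using le by simp
        also have "\<dots> \<le> L + 1" unfolding i0_def using cL1 cL2 by simp
        also have "\<dots> \<le> 2 * L" using L8640 by simp
        finally have "real_of_int (r_param \<epsilon> n M T) \<le> 2 * (log 2 (real n)) powr alpha \<epsilon>"
          unfolding Ln .
        then show "M \<in> \<Omega> \<inter> E" using M big unfolding E_def by blast
      qed
      have fin: "finite \<Omega>" unfolding \<Omega>_def by (rule finite_Omega)
      have ne: "\<Omega> \<noteq> {}" unfolding \<Omega>_def using Omega_ne ev by blast
      have cpos: "0 < real (card \<Omega>)" using fin ne by (simp add: card_gt_0_iff)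
      have "real (card \<Omega>) - real (card (Bad n (2 * m))) \<le> real (card (\<Omega> - Bad n (2 * m)))"
      proof -
        have "card \<Omega> \<le> card (\<Omega> - Bad n (2 * m)) + card (\<Omega> \<inter> Bad n (2 * m))"
          by (metis card_Un_le Diff_partition Int_Diff_Un Un_commute)
        moreover have "card (\<Omega> \<inter> Bad n (2 * m)) \<le> card (Bad n (2 * m))"
        proof -
          have "Bad n (2 * m) \<subseteq> \<Omega>" unfolding Bad_def EV_def \<Omega>_def by auto
          then show ?thesis by (simp add: Int_absorb1)
        qed
        ultimately show ?thesis by linarith
      qed
      also have "\<dots> \<le> real (card (\<Omega> \<inter> E))"
        using sub fin by (simp add: card_mono)
      finally have cE: "real (card \<Omega>) - real (card (Bad n (2 * m))) \<le> real (card (\<Omega> \<inter> E))" .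
      have "measure_pmf.prob (random_graph n) E = real (card (\<Omega> \<inter> E)) / real (card \<Omega>)"
        unfolding random_graph_def \<Omega>_def using measure_pmf_of_set fin ne unfolding \<Omega>_def by blast
      moreover have "1 - \<delta> \<le> real (card (\<Omega> \<inter> E)) / real (card \<Omega>)"
        using cE bad cpos by (simp add: field_simps)
      ultimately have "1 - \<delta> \<le> measure_pmf.prob (random_graph n) E" by simp
      then show "1 - \<delta> \<le> measure_pmf.prob (random_graph n)
          {M. (\<exists>i. card (ball n M T i) \<ge> 2 * m_param \<epsilon> n) \<and>
              real_of_int (r_param \<epsilon> n M T) \<le> 2 * (log 2 (real n)) powr alpha \<epsilon>}"
        unfolding E_def .
    qed
  qed
qed


end
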